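(* Let $k\geq 3$ and let $0<c<\frac{1}{k(k-1)}$. Then there exists $\gamma>0$ such that, with probability $1-o(1)$ as $n\to\infty$, a random instance $\Phi$ of 1-in-$k$ SAT with $n$ variables and $cn$ clauses has the property that every two satisfying assignments of $\Phi$ are $\lfloor\gamma\log n\rfloor$-connected.
   Context: An instance of 1-in-$k$ SAT is a conjunction of clauses, each consisting of exactly $k$ literals on $k$ distinct variables from $x_1,\dots,x_n$; an assignment $A\in\{0,1\}^n$ satisfies the instance if in every clause exactly one literal is true. A random instance with $n$ variables and $cn$ clauses consists of $cn$ clauses, each chosen independently and uniformly at random from the $2^k\binom{n}{k}$ possible clauses (a set of $k$ distinct variables together with a choice of sign for each). For an integer $l\geq 1$, two satisfying assignments $A,B$ of $\Phi$ are $l$-connected if there is a sequence of satisfying assignments $A_0=A,A_1,\dots,A_r=B$ of $\Phi$ such that $A_i$ and $A_{i+1}$ are at Hamming distance at most $l$ for every $i$. *)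

theory Defs
  imports "HOL-Probability.Probability"
begin

text \<open>A literal is a pair (variable index, sign); literal (v,s) is true under A iff A v = s.
  Variables are x_0, ..., x_(n-1) (indices below n).\<close>
type_synonym literal = "nat \<times> bool"
type_synonym clause = "literal set"

text \<open>The 2^k (n choose k) possible clauses: k literals on k distinct variables.\<close>
definition clauses :: "nat \<Rightarrow> nat \<Rightarrow> clause set" where
  "clauses n k = {C. finite C \<and> card C = k \<and> card (fst ` C) = k \<and> fst ` C \<subseteq> {..<n}}"

text \<open>Assignments in {0,1}^n, represented as functions that are False outside {..<n}.\<close>
definition assignments :: "nat \<Rightarrow> (nat \<Rightarrow> bool) set" where
  "assignments n = {A. \<forall>i\<ge>n. \<not> A i}"

definition lit_true :: "(nat \<Rightarrow> bool) \<Rightarrow> literal \<Rightarrow> bool" where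
  "lit_true A l = (A (fst l) = snd l)"

definition satisfies_1ink :: "(nat \<Rightarrow> bool) \<Rightarrow> clause list \<Rightarrow> bool" where
  "satisfies_1ink A \<Phi> = (\<forall>C\<in>set \<Phi>. card {l\<in>C. lit_true A l} = 1)"

definition sat_assignments :: "nat \<Rightarrow> clause list \<Rightarrow> (nat \<Rightarrow> bool) set" where
  "sat_assignments n \<Phi> = {A \<in> assignments n. satisfies_1ink A \<Phi>}"

definition hamming :: "nat \<Rightarrow> (nat \<Rightarrow> bool) \<Rightarrow> (nat \<Rightarrow> bool) \<Rightarrow> nat" where
  "hamming n A B = card {i. i < n \<and> A i \<noteq> B i}"

definition l_connected ::
  "nat \<Rightarrow> clause list \<Rightarrow> nat \<Rightarrow> (nat \<Rightarrow> bool) \<Rightarrow> (nat \<Rightarrow> bool) \<Rightarrow> bool" where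
  "l_connected n \<Phi> l A B =
     (\<exists>As. As \<noteq> [] \<and> hd As = A \<and> last As = B \<and>
        set As \<subseteq> sat_assignments n \<Phi> \<and>
        (\<forall>i. Suc i < length As \<longrightarrow> hamming n (As ! i) (As ! Suc i) \<le> l))"

text \<open>Random instance: m clauses chosen independently uniformly, i.e. the uniform
  distribution on lists of length m of clauses.\<close>
definition instances :: "nat \<Rightarrow> nat \<Rightarrow> nat \<Rightarrow> clause list set" where
  "instances n k m = {\<Phi>. length \<Phi> = m \<and> set \<Phi> \<subseteq> clauses n k}"

definition random_1ink :: "nat \<Rightarrow> nat \<Rightarrow> nat \<Rightarrow> clause list pmf" where
  "random_1ink n k m = pmf_of_set (instances n k m)"

end

theory Submission
  imports Defs
begin

abbreviation lsts :: "'a set \<Rightarrow> nat \<Rightarrow> 'a list set" where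
  "lsts A m \<equiv> {xs. set xs \<subseteq> A \<and> length xs = m}"

lemma sum_lists_Suc:
  assumes "finite A"
  shows "(\<Sum>xs\<in>lsts A (Suc m). f xs) = (\<Sum>x\<in>A. \<Sum>xs\<in>lsts A m. f (x#xs))"
proof -
  have inj: "inj_on (\<lambda>(xs, n). n#xs) (lsts A m \<times> A)" by (auto simp: inj_on_def)
  have "(\<Sum>xs\<in>lsts A (Suc m). f xs) = (\<Sum>p\<in>lsts A m \<times> A. f (snd p # fst p))"
    unfolding lists_length_Suc_eq by (subst sum.reindex[OF inj]) (auto simp: case_prod_beta)
  also have "\<dots> = (\<Sum>xs\<in>lsts A m. \<Sum>x\<in>A. f (x#xs))"
    by (subst sum.cartesian_product) (simp add: case_prod_beta)
  also have "\<dots> = (\<Sum>x\<in>A. \<Sum>xs\<in>lsts A m. f (x#xs))"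
    by (rule sum.swap)
  finally show ?thesis .
qed

lemma filter_sum:
  fixes h :: "'a list \<Rightarrow> 'a list \<Rightarrow> real" and lam K c0 :: real
  assumes fin: "finite A" and lam: "lam \<ge> 0"
    and hyp: "\<And>T j. (\<Sum>R\<in>lsts {x\<in>A. \<not> P x} j. h T R) \<le> c0 * K ^ j"
  shows "(\<Sum>\<Phi>\<in>lsts A m. lam ^ length (filter P \<Phi>) * h (filter P \<Phi>) (filter (\<lambda>x. \<not> P x) \<Phi>))
          \<le> c0 * (lam * card {x\<in>A. P x} + K) ^ m"
  using hyp
proof (induction m arbitrary: h c0)
  case 0
  have "{xs. set xs \<subseteq> A \<and> length xs = 0} = {[]}" by auto
  moreover have "{xs. set xs \<subseteq> {x\<in>A. \<not> P x} \<and> length xs = 0} = {[]}" by auto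
  ultimately show ?case using "0.prems"[of "[]" 0] by simp
next
  case (Suc m)
  define Q where "Q = {x\<in>A. P x}"
  define B where "B = {x\<in>A. \<not> P x}"
  define X where "X = lam * card Q + K"
  have finQ: "finite Q" and finB: "finite B" using fin by (auto simp: Q_def B_def)
  have AQB: "A = Q \<union> B" "Q \<inter> B = {}" by (auto simp: Q_def B_def)
  let ?g = "\<lambda>\<Phi>. lam ^ length (filter P \<Phi>) * h (filter P \<Phi>) (filter (\<lambda>x. \<not> P x) \<Phi>)"
  have "(\<Sum>\<Phi>\<in>lsts A (Suc m). ?g \<Phi>) = (\<Sum>x\<in>A. \<Sum>\<Phi>\<in>lsts A m. ?g (x#\<Phi>))"
    by (rule sum_lists_Suc[OF fin])
  also have "\<dots> = (\<Sum>x\<in>Q. \<Sum>\<Phi>\<in>lsts A m. ?g (x#\<Phi>)) + (\<Sum>x\<in>B. \<Sum>\<Phi>\<in>lsts A m. ?g (x#\<Phi>))"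
    using AQB finQ finB by (simp add: sum.union_disjoint)
  also have "(\<Sum>x\<in>Q. \<Sum>\<Phi>\<in>lsts A m. ?g (x#\<Phi>)) \<le> (\<Sum>x\<in>Q. lam * (c0 * X ^ m))"
  proof (rule sum_mono)
    fix x assume x: "x \<in> Q"
    have "(\<Sum>\<Phi>\<in>lsts A m. ?g (x#\<Phi>)) = lam * (\<Sum>\<Phi>\<in>lsts A m. lam ^ length (filter P \<Phi>) * h (x # filter P \<Phi>) (filter (\<lambda>x. \<not> P x) \<Phi>))"
      using x by (simp add: Q_def sum_distrib_left mult_ac)
    also have "\<dots> \<le> lam * (c0 * X ^ m)"
      using Suc.IH[of "\<lambda>T R. h (x#T) R" c0] Suc.prems lam
      by (intro mult_left_mono) (auto simp: X_def Q_def)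
    finally show "(\<Sum>\<Phi>\<in>lsts A m. ?g (x#\<Phi>)) \<le> lam * (c0 * X ^ m)" .
  qed
  also have "(\<Sum>x\<in>B. \<Sum>\<Phi>\<in>lsts A m. ?g (x#\<Phi>)) =
     (\<Sum>\<Phi>\<in>lsts A m. lam ^ length (filter P \<Phi>) * (\<Sum>x\<in>B. h (filter P \<Phi>) (x # filter (\<lambda>x. \<not> P x) \<Phi>)))"
    by (subst sum.swap) (auto simp: B_def sum_distrib_left intro!: sum.cong)
  also have "\<dots> \<le> (c0 * K) * X ^ m"
  proof -
    have "\<And>T j. (\<Sum>R\<in>lsts B j. \<Sum>x\<in>B. h T (x # R)) \<le> (c0 * K) * K ^ j"
    proof -
      fix T j
      have "(\<Sum>R\<in>lsts B j. \<Sum>x\<in>B. h T (x # R)) = (\<Sum>R\<in>lsts B (Suc j). h T R)"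
        by (subst sum_lists_Suc[OF finB]) (rule sum.swap)
      also have "\<dots> \<le> c0 * K ^ Suc j" using Suc.prems[of T "Suc j"] by (simp add: B_def)
      finally show "(\<Sum>R\<in>lsts B j. \<Sum>x\<in>B. h T (x # R)) \<le> (c0 * K) * K ^ j" by (simp add: mult_ac)
    qed
    then show ?thesis
      using Suc.IH[of "\<lambda>T R. \<Sum>x\<in>B. h T (x # R)" "c0 * K"] by (simp add: X_def Q_def B_def)
  qed
  finally have "(\<Sum>\<Phi>\<in>lsts A (Suc m). ?g \<Phi>) \<le> card Q * (lam * (c0 * X ^ m)) + c0 * K * X ^ m"
    by simp
  also have "\<dots> = c0 * X ^ Suc m" by (simp add: X_def algebra_simps)
  finally show ?case by (simp add: X_def Q_def)
qed

definition adj :: "clause list \<Rightarrow> (nat \<times> nat) set" where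
  "adj \<Phi> = {(a,b). \<exists>C\<in>set \<Phi>. a \<in> fst ` C \<and> b \<in> fst ` C}"

definition cl :: "clause list \<Rightarrow> nat \<Rightarrow> nat set" where
  "cl \<Phi> v = {w. (v,w) \<in> (adj \<Phi>)\<^sup>*}"

lemma cl_closed: "a \<in> cl \<Phi> v \<Longrightarrow> C \<in> set \<Phi> \<Longrightarrow> a \<in> fst ` C \<Longrightarrow> fst ` C \<subseteq> cl \<Phi> v"
  unfolding cl_def adj_def by (auto intro: rtrancl_into_rtrancl)

lemma cl_self: "v \<in> cl \<Phi> v" by (simp add: cl_def)

fun expl :: "nat \<Rightarrow> nat list \<Rightarrow> nat set \<Rightarrow> clause list \<Rightarrow> nat" where
  "expl 0 E D \<Phi> = 0"
| "expl (Suc r) E D \<Phi> = (if D - set E = {} then 0 else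
    (let u = (SOME u. u \<in> D - set E) in
     length (filter (\<lambda>C. u \<in> fst ` C) \<Phi>) +
     expl r (E @ [u]) (D \<union> (\<Union>C\<in>set (filter (\<lambda>C. u \<in> fst ` C) \<Phi>). fst ` C))
        (filter (\<lambda>C. u \<notin> fst ` C) \<Phi>)))"

lemma expl_grow:
  assumes cls: "set \<Phi>0 \<subseteq> clauses n k"
  shows "set E \<subseteq> D \<Longrightarrow> D \<subseteq> cl \<Phi>0 v \<Longrightarrow> finite D \<Longrightarrow> distinct E \<Longrightarrow>
    \<Phi> = filter (\<lambda>C. fst ` C \<inter> set E = {}) \<Phi>0 \<Longrightarrow>
    (\<forall>C\<in>set \<Phi>0. fst ` C \<inter> set E \<noteq> {} \<longrightarrow> fst ` C \<subseteq> D) \<Longrightarrow> v \<in> D \<Longrightarrow>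
    card D \<le> 1 + (k-1)*t \<Longrightarrow> length E + r < card (cl \<Phi>0 v) \<Longrightarrow>
    length E + r \<le> 1 + (k-1)*(t + expl r E D \<Phi>)"
proof (induction r arbitrary: E D t \<Phi>)
  case 0
  have "length E = card (set E)" using 0 by (simp add: distinct_card)
  also have "\<dots> \<le> card D" using 0 by (intro card_mono) auto
  finally show ?case using 0 by simp
next
  case (Suc r)
  show ?case
  proof (cases "D - set E = {}")
    case True
    hence DE: "D = set E" using Suc.prems by auto
    have "cl \<Phi>0 v \<subseteq> D"
    proof
      fix w assume "w \<in> cl \<Phi>0 v"
      hence "(v,w) \<in> (adj \<Phi>0)\<^sup>*" by (simp add: cl_def)
      then show "w \<in> D"
      proof (induction rule: rtrancl_induct)
        case base then show ?case using Suc.prems by simp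
      next
        case (step a b)
        then obtain C where C: "C \<in> set \<Phi>0" "a \<in> fst ` C" "b \<in> fst ` C" by (auto simp: adj_def)
        then have "fst ` C \<inter> set E \<noteq> {}" using step DE by auto
        then have "fst ` C \<subseteq> D" using Suc.prems(6) C(1) by blast
        then show ?case using C(3) by blast
      qed
    qed
    hence "card (cl \<Phi>0 v) \<le> card D" using Suc.prems by (intro card_mono) auto
    also have "\<dots> = length E" using DE Suc.prems by (simp add: distinct_card)
    finally show ?thesis using Suc.prems by simp
  next
    case False
    define u where "u = (SOME u. u \<in> D - set E)"
    have u: "u \<in> D" "u \<notin> set E" using False someI_ex[of "\<lambda>u. u \<in> D - set E"] by (auto simp: u_def)
    define T where "T = filter (\<lambda>C. u \<in> fst ` C) \<Phi>"
    define R where "R = filter (\<lambda>C. u \<notin> fst ` C) \<Phi>"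
    define D' where "D' = D \<union> (\<Union>C\<in>set T. fst ` C)"
    have ex: "expl (Suc r) E D \<Phi> = length T + expl r (E @ [u]) D' R"
      unfolding expl.simps if_not_P[OF False] Let_def u_def[symmetric] T_def R_def D'_def ..
    have Tcl: "\<And>C. C \<in> set T \<Longrightarrow> C \<in> clauses n k \<and> u \<in> fst ` C \<and> C \<in> set \<Phi>0"
      using cls Suc.prems(5) by (auto simp: T_def)
    have cardC: "\<And>C. C \<in> clauses n k \<Longrightarrow> card (fst ` C) = k \<and> finite (fst ` C)"
      by (auto simp: clauses_def)
    have D'eq: "D' = D \<union> (\<Union>C\<in>set T. fst ` C - {u})" using u by (auto simp: D'_def)
    have "card D' \<le> card D + card (\<Union>C\<in>set T. fst ` C - {u})"
      unfolding D'eq by (rule card_Un_le)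
    also have "card (\<Union>C\<in>set T. fst ` C - {u}) \<le> (\<Sum>C\<in>set T. card (fst ` C - {u}))"
      by (rule card_UN_le) simp
    also have "\<dots> = (\<Sum>C\<in>set T. k - 1)"
      using Tcl cardC by (intro sum.cong) (auto simp: card_Diff_singleton)
    also have "\<dots> \<le> length T * (k-1)" using card_length[of T] by simp
    finally have cardD': "card D' \<le> 1 + (k-1)*(t + length T)"
      using Suc.prems(8) by (simp add: algebra_simps)
    have "length (E @ [u]) + r \<le> 1 + (k-1)*((t + length T) + expl r (E @ [u]) D' R)"
    proof (rule Suc.IH)
      show "set (E @ [u]) \<subseteq> D'" using Suc.prems u by (auto simp: D'_def)
      show "D' \<subseteq> cl \<Phi>0 v"
      proof -
        have "u \<in> cl \<Phi>0 v" using u Suc.prems(2) by blast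
        then have "\<And>C. C \<in> set T \<Longrightarrow> fst ` C \<subseteq> cl \<Phi>0 v" using Tcl cl_closed by blast
        then show ?thesis using Suc.prems(2) by (auto simp: D'_def)
      qed
      show "finite D'" using Suc.prems Tcl cardC by (auto simp: D'_def)
      show "distinct (E @ [u])" using Suc.prems u by simp
      show "R = filter (\<lambda>C. fst ` C \<inter> set (E @ [u]) = {}) \<Phi>0"
        using Suc.prems(5) by (simp add: R_def) (intro filter_cong; auto)
      show "\<forall>C\<in>set \<Phi>0. fst ` C \<inter> set (E @ [u]) \<noteq> {} \<longrightarrow> fst ` C \<subseteq> D'"
      proof (intro ballI impI)
        fix C assume C: "C \<in> set \<Phi>0" "fst ` C \<inter> set (E @ [u]) \<noteq> {}"
        show "fst ` C \<subseteq> D'"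
        proof (cases "fst ` C \<inter> set E = {}")
          case True
          then have "u \<in> fst ` C" using C by auto
          then have "C \<in> set T" using C True Suc.prems(5) by (auto simp: T_def)
          then show ?thesis by (auto simp: D'_def)
        next
          case False then have "fst ` C \<subseteq> D" using Suc.prems(6) C(1) by blast
          then show ?thesis by (auto simp: D'_def)
        qed
      qed
      show "v \<in> D'" using Suc.prems by (simp add: D'_def)
      show "card D' \<le> 1 + (k-1)*(t + length T)" by (rule cardD')
      show "length (E @ [u]) + r < card (cl \<Phi>0 v)" using Suc.prems by simp
    qed
    then show ?thesis using ex by (simp add: algebra_simps)
  qed
qed

definition Aset :: "nat \<Rightarrow> nat \<Rightarrow> nat list \<Rightarrow> clause set" where
  "Aset n k E = {C \<in> clauses n k. fst ` C \<inter> set E = {}}"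

lemma finite_clauses: "finite (clauses n k)"
proof -
  have "clauses n k \<subseteq> Pow ({..<n} \<times> UNIV)" by (auto simp: clauses_def)
  then show ?thesis by (rule finite_subset) auto
qed

lemma expl_count:
  fixes lam \<alpha> :: real
  assumes lam: "lam \<ge> 1" and alpha: "\<And>u. card {C \<in> clauses n k. u \<in> fst ` C} \<le> \<alpha>"
  shows "(\<Sum>\<Phi>\<in>lsts (Aset n k E) m. lam ^ expl r E D \<Phi>) \<le> (card (Aset n k E) + (lam-1)*r*\<alpha>)^m"
proof (induction r arbitrary: E D m)
  have a0: "\<alpha> \<ge> 0" using alpha[of 0] by (meson of_nat_0_le_iff order_trans)
  have finA: "\<And>E. finite (Aset n k E)" using finite_clauses by (auto simp: Aset_def)
  {
    case 0
    show ?case using finA by (simp add: card_lists_length_eq)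
  next
    case (Suc r)
    show ?case
    proof (cases "D - set E = {}")
      case True
      have "(\<Sum>\<Phi>\<in>lsts (Aset n k E) m. lam ^ expl (Suc r) E D \<Phi>) = card (Aset n k E) ^ m"
        using True finA by (simp add: card_lists_length_eq)
      also have "\<dots> \<le> (card (Aset n k E) + (lam-1)*Suc r*\<alpha>)^m"
        using lam a0 unfolding of_nat_power by (intro power_mono) auto
      finally show ?thesis .
    next
      case False
      define u where "u = (SOME u. u \<in> D - set E)"
      define P where "P = (\<lambda>C::clause. u \<in> fst ` C)"
      define h where "h = (\<lambda>(T::clause list) R. lam ^ expl r (E @ [u]) (D \<union> (\<Union>C\<in>set T. fst ` C)) R)"
      have ex: "\<And>\<Phi>. expl (Suc r) E D \<Phi> = length (filter P \<Phi>) +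
                expl r (E @ [u]) (D \<union> (\<Union>C\<in>set (filter P \<Phi>). fst ` C)) (filter (\<lambda>C. \<not> P C) \<Phi>)"
        unfolding expl.simps if_not_P[OF False] Let_def u_def[symmetric] P_def ..
      have Beq: "{x \<in> Aset n k E. \<not> P x} = Aset n k (E @ [u])" by (auto simp: Aset_def P_def)
      define K where "K = card (Aset n k (E @ [u])) + (lam-1)*r*\<alpha>"
      have "(\<Sum>\<Phi>\<in>lsts (Aset n k E) m. lam ^ expl (Suc r) E D \<Phi>) =
            (\<Sum>\<Phi>\<in>lsts (Aset n k E) m. lam ^ length (filter P \<Phi>) * h (filter P \<Phi>) (filter (\<lambda>x. \<not> P x) \<Phi>))"
        by (simp only: ex h_def power_add)
      also have "\<dots> \<le> 1 * (lam * card {x\<in>Aset n k E. P x} + K) ^ m"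
      proof (rule filter_sum)
        show "finite (Aset n k E)" by (rule finA)
        show "lam \<ge> 0" using lam by simp
        fix T j
        show "(\<Sum>R\<in>lsts {x\<in>Aset n k E. \<not> P x} j. h T R) \<le> 1 * K ^ j"
          unfolding Beq h_def K_def using Suc.IH by simp
      qed
      also have "\<dots> \<le> (card (Aset n k E) + (lam-1)*Suc r*\<alpha>)^m"
        unfolding mult_1
      proof (intro power_mono)
        have fQ: "finite {x\<in>Aset n k E. P x}" using finA by simp
        have "card (Aset n k E) = card {x\<in>Aset n k E. P x} + card (Aset n k (E @ [u]))"
          unfolding Beq[symmetric] using finA[of E]
          by (subst card_Un_disjoint[symmetric]) (auto intro: arg_cong[where f=card])
        moreover have qa: "card {x\<in>Aset n k E. P x} \<le> \<alpha>"
        proof -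
          have "{x\<in>Aset n k E. P x} \<subseteq> {C \<in> clauses n k. u \<in> fst ` C}" by (auto simp: Aset_def P_def)
          then have "card {x\<in>Aset n k E. P x} \<le> card {C \<in> clauses n k. u \<in> fst ` C}"
            using finite_clauses by (intro card_mono) auto
          then show ?thesis using alpha[of u] by linarith
        qed
        ultimately show "lam * card {x\<in>Aset n k E. P x} + K \<le> card (Aset n k E) + (lam-1)*Suc r*\<alpha>"
        proof -
          assume e: "card (Aset n k E) = card {x\<in>Aset n k E. P x} + card (Aset n k (E @ [u]))"
          have "(lam-1) * card {x\<in>Aset n k E. P x} \<le> (lam-1)*\<alpha>" using qa lam by (intro mult_left_mono) auto
          then show ?thesis using e by (simp add: K_def algebra_simps)
        qed
        show "0 \<le> lam * card {x\<in>Aset n k E. P x} + K" using lam a0 by (simp add: K_def)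
      qed
      finally show ?thesis by simp
    qed
  }
qed

definition sw :: "nat \<Rightarrow> nat \<Rightarrow> nat \<Rightarrow> nat" where
  "sw u w x = (if x = u then w else if x = w then u else x)"

lemma sw_sw [simp]: "sw u w (sw u w x) = x" by (simp add: sw_def)
lemma inj_sw: "inj (sw u w)" by (metis injI sw_sw)

definition Psi :: "nat \<Rightarrow> nat \<Rightarrow> clause \<Rightarrow> clause" where
  "Psi u w C = map_prod (sw u w) id ` C"

lemma Psi_Psi [simp]: "Psi u w (Psi u w C) = C"
  by (force simp: Psi_def image_image map_prod_def case_prod_beta)

lemma inj_map_sw: "inj (map_prod (sw u w) (id::bool\<Rightarrow>bool))"
proof (rule injI)
  fix x y :: "nat \<times> bool" assume "map_prod (sw u w) id x = map_prod (sw u w) id y"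
  then show "x = y" by (cases x, cases y) (simp, metis sw_sw)
qed

lemma fst_Psi: "fst ` Psi u w C = sw u w ` fst ` C"
  by (force simp: Psi_def image_image)

lemma Psi_clauses:
  assumes "u < n" "w < n" "C \<in> clauses n k" shows "Psi u w C \<in> clauses n k"
proof -
  have "finite (Psi u w C)" using assms by (simp add: clauses_def Psi_def)
  moreover have "card (Psi u w C) = k"
    using assms inj_map_sw unfolding Psi_def clauses_def
    by (simp add: card_image inj_on_subset[OF _ subset_UNIV])
  moreover have "card (fst ` Psi u w C) = k"
    using assms inj_sw unfolding fst_Psi clauses_def
    by (simp add: card_image inj_on_subset[OF _ subset_UNIV])
  moreover have "fst ` Psi u w C \<subseteq> {..<n}"
    using assms unfolding fst_Psi clauses_def by (auto simp: sw_def)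
  ultimately show ?thesis by (simp add: clauses_def)
qed

lemma mem_Psi: "(u \<in> fst ` Psi u w C) = (w \<in> fst ` C)"
  unfolding fst_Psi by (force simp: sw_def)

lemma card_sym_le:
  assumes "u < n" "w < n"
  shows "card {C \<in> clauses n k. u \<in> fst ` C} \<le> card {C \<in> clauses n k. w \<in> fst ` C}"
proof (rule card_inj_on_le)
  show "inj_on (Psi u w) {C \<in> clauses n k. u \<in> fst ` C}" by (metis Psi_Psi inj_onI)
  show "Psi u w ` {C \<in> clauses n k. u \<in> fst ` C} \<subseteq> {C \<in> clauses n k. w \<in> fst ` C}"
  proof
    fix D assume "D \<in> Psi u w ` {C \<in> clauses n k. u \<in> fst ` C}"
    then obtain C where C: "C \<in> clauses n k" "u \<in> fst ` C" "D = Psi u w C" by auto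
    have "u \<in> fst ` Psi u w (Psi u w C)" using C by simp
    then have "w \<in> fst ` D" using C mem_Psi by metis
    then show "D \<in> {C \<in> clauses n k. w \<in> fst ` C}" using C Psi_clauses assms by auto
  qed
  show "finite {C \<in> clauses n k. w \<in> fst ` C}" using finite_clauses by simp
qed

lemma card_sym:
  assumes "u < n" "w < n"
  shows "card {C \<in> clauses n k. u \<in> fst ` C} = card {C \<in> clauses n k. w \<in> fst ` C}"
  using card_sym_le[OF assms, of k] card_sym_le[OF assms(2,1), of k] by (rule le_antisym)

lemma double_count:
  "(\<Sum>w<n. card {C \<in> clauses n k. w \<in> fst ` C}) = k * card (clauses n k)"
proof -
  have "(\<Sum>w<n. card {C \<in> clauses n k. w \<in> fst ` C}) =
        (\<Sum>w<n. \<Sum>C\<in>clauses n k. if w \<in> fst ` C then 1 else 0)"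
    using finite_clauses by (simp add: sum.inter_filter[symmetric])
  also have "\<dots> = (\<Sum>C\<in>clauses n k. \<Sum>w<n. if w \<in> fst ` C then 1 else 0)" by (rule sum.swap)
  also have "\<dots> = (\<Sum>C\<in>clauses n k. card {w\<in>{..<n}. w \<in> fst ` C})"
    by (simp add: sum.inter_filter[symmetric])
  also have "\<dots> = (\<Sum>C\<in>clauses n k. k)"
  proof (rule sum.cong)
    fix C assume "C \<in> clauses n k"
    then have "{w\<in>{..<n}. w \<in> fst ` C} = fst ` C" "card (fst ` C) = k" by (auto simp: clauses_def)
    then show "card {w\<in>{..<n}. w \<in> fst ` C} = k" by simp
  qed simp
  finally show ?thesis by simp
qed

lemma alpha_bound:
  assumes "n > 0"
  shows "real (card {C \<in> clauses n k. u \<in> fst ` C}) \<le> real k * card (clauses n k) / n"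
proof (cases "u < n")
  case True
  have "(\<Sum>w<n. card {C \<in> clauses n k. w \<in> fst ` C}) = (\<Sum>w<n. card {C \<in> clauses n k. u \<in> fst ` C})"
    using card_sym[OF True] by (intro sum.cong) auto
  then have "n * card {C \<in> clauses n k. u \<in> fst ` C} = k * card (clauses n k)"
    using double_count[of n k] by simp
  then have "real n * card {C \<in> clauses n k. u \<in> fst ` C} = real k * card (clauses n k)"
    by (metis of_nat_mult)
  then show ?thesis using assms by (simp add: field_simps)
next
  case False
  then have "{C \<in> clauses n k. u \<in> fst ` C} = {}" by (auto simp: clauses_def)
  then show ?thesis by (simp only: card.empty of_nat_0) simp
qed

lemma cl_sub:
  assumes "set \<Phi> \<subseteq> clauses n k" shows "cl \<Phi> v \<subseteq> insert v {..<n}"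
proof
  fix w assume "w \<in> cl \<Phi> v"
  then have "(v,w) \<in> (adj \<Phi>)\<^sup>*" by (simp add: cl_def)
  then show "w \<in> insert v {..<n}"
  proof (induction rule: rtrancl_induct)
    case (step a b)
    then obtain C where "C \<in> set \<Phi>" "b \<in> fst ` C" by (auto simp: adj_def)
    then show ?case using assms by (auto simp: clauses_def)
  qed simp
qed

lemma finite_cl: "set \<Phi> \<subseteq> clauses n k \<Longrightarrow> finite (cl \<Phi> v)"
  using cl_sub by (meson finite_insert finite_lessThan finite_subset)

lemma connect:
  assumes cls: "set \<Phi> \<subseteq> clauses n k"
    and A: "A \<in> sat_assignments n \<Phi>" and B: "B \<in> sat_assignments n \<Phi>"
    and small: "\<forall>v<n. card (cl \<Phi> v) \<le> L"
  shows "l_connected n \<Phi> L A B"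
proof -
  define U where "U j = (\<Union>v<j. cl \<Phi> v)" for j
  define H where "H j = (\<lambda>i. if i \<in> U j then B i else A i)" for j
  have Hsat: "H j \<in> sat_assignments n \<Phi>" for j
  proof -
    have "H j \<in> assignments n" using A B by (auto simp: sat_assignments_def assignments_def H_def)
    moreover have "card {l\<in>C. lit_true (H j) l} = 1" if C: "C \<in> set \<Phi>" for C
    proof (cases "fst ` C \<inter> U j = {}")
      case True
      then have "{l\<in>C. lit_true (H j) l} = {l\<in>C. lit_true A l}"
        by (force simp: H_def lit_true_def)
      then show ?thesis using A C by (simp add: sat_assignments_def satisfies_1ink_def)
    next
      case False
      then obtain x v where "x \<in> fst ` C" "v < j" "x \<in> cl \<Phi> v" by (auto simp: U_def)
      then have "fst ` C \<subseteq> cl \<Phi> v" using cl_closed C by blast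
      then have "fst ` C \<subseteq> U j" using \<open>v < j\<close> by (auto simp: U_def)
      then have "{l\<in>C. lit_true (H j) l} = {l\<in>C. lit_true B l}"
        by (force simp: H_def lit_true_def)
      then show ?thesis using B C by (simp add: sat_assignments_def satisfies_1ink_def)
    qed
    ultimately show ?thesis by (simp add: sat_assignments_def satisfies_1ink_def)
  qed
  define As where "As = map H [0..<Suc n]"
  have "As \<noteq> []" by (simp add: As_def)
  moreover have "hd As = A"
  proof -
    have "[0..<Suc n] = 0 # [1..<Suc n]" by (simp add: upt_rec)
    then show ?thesis by (simp add: As_def H_def U_def)
  qed
  moreover have "last As = B"
  proof -
    have "last As = H n" by (simp add: As_def last_map)
    moreover have "H n = B"
    proof
      fix i show "H n i = B i"
      proof (cases "i < n")
        case True then have "i \<in> U n" using cl_self[of i \<Phi>] by (auto simp: U_def)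
        then show ?thesis by (simp add: H_def)
      next
        case False then show ?thesis using A B
          by (auto simp: H_def sat_assignments_def assignments_def)
      qed
    qed
    ultimately show ?thesis by simp
  qed
  moreover have "set As \<subseteq> sat_assignments n \<Phi>" using Hsat by (auto simp: As_def)
  moreover have "hamming n (As ! i) (As ! Suc i) \<le> L" if i: "Suc i < length As" for i
  proof -
    have ii: "i < n" using i by (simp add: As_def)
    have "As ! i = H i" "As ! Suc i = H (Suc i)" using i
      by (simp_all add: As_def del: upt_Suc)
    moreover have "{x. x < n \<and> H i x \<noteq> H (Suc i) x} \<subseteq> cl \<Phi> i"
      by (auto simp: H_def U_def lessThan_Suc split: if_splits)
    then have "card {x. x < n \<and> H i x \<noteq> H (Suc i) x} \<le> card (cl \<Phi> i)"
      by (intro card_mono finite_cl[OF cls])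
    ultimately show ?thesis using small ii unfolding hamming_def by (metis order_trans)
  qed
  ultimately show ?thesis unfolding l_connected_def by blast
qed

lemma instances_eq: "instances n k m = lsts (clauses n k) m"
  by (auto simp: instances_def)

lemma bad_expl:
  assumes cls: "set \<Phi> \<subseteq> clauses n k" and L: "L < card (cl \<Phi> v)"
  shows "L \<le> 1 + (k-1) * expl L [] {v} \<Phi>"
  using expl_grow[OF cls, of "[]" "{v}" v \<Phi> 0 L] L cl_self[of v \<Phi>] by simp

lemma per_v:
  fixes lam :: real
  assumes k: "k \<ge> 2" and n: "n > 0" and lam: "lam \<ge> 1"
  shows "card {\<Phi> \<in> instances n k m. L < card (cl \<Phi> v)} * lam powr ((real L - 1)/(real k - 1))
         \<le> card (clauses n k)^m * (1 + (lam-1)*L*k/n)^m"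
proof -
  define X where "X = clauses n k"
  define Bad where "Bad = {\<Phi> \<in> instances n k m. L < card (cl \<Phi> v)}"
  define lp where "lp = lam powr ((real L - 1)/(real k - 1))"
  have finI: "finite (lsts X m)" using finite_clauses by (simp add: X_def finite_lists_length_eq)
  have BadI: "Bad \<subseteq> lsts X m" by (auto simp: Bad_def instances_eq X_def)
  have key: "lp \<le> lam ^ expl L [] {v} \<Phi>" if "\<Phi> \<in> Bad" for \<Phi>
  proof -
    have cls: "set \<Phi> \<subseteq> clauses n k" using that by (auto simp: Bad_def instances_def)
    have "L \<le> 1 + (k-1) * expl L [] {v} \<Phi>" using bad_expl[OF cls] that by (simp add: Bad_def)
    then have "real L \<le> real (1 + (k-1) * expl L [] {v} \<Phi>)" by (simp only: of_nat_le_iff)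
    also have "\<dots> = 1 + (real k - 1) * expl L [] {v} \<Phi>" using k by (simp add: of_nat_diff)
    finally have "real L \<le> 1 + (real k - 1) * expl L [] {v} \<Phi>" .
    then have "(real L - 1)/(real k - 1) \<le> real (expl L [] {v} \<Phi>)" using k
      by (simp add: divide_le_eq mult.commute)
    then have "lp \<le> lam powr real (expl L [] {v} \<Phi>)" unfolding lp_def using lam by (intro powr_mono) auto
    then show ?thesis using lam by (simp add: powr_realpow)
  qed
  have "card Bad * lp = (\<Sum>\<Phi>\<in>Bad. lp)" by simp
  also have "\<dots> \<le> (\<Sum>\<Phi>\<in>Bad. lam ^ expl L [] {v} \<Phi>)" using key by (intro sum_mono) auto
  also have "\<dots> \<le> (\<Sum>\<Phi>\<in>lsts X m. lam ^ expl L [] {v} \<Phi>)"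
    using lam by (intro sum_mono2[OF finI BadI]) auto
  also have "\<dots> \<le> (card (Aset n k []) + (lam-1)*L*(real k * card X / n))^m"
  proof -
    have "Aset n k [] = X" by (simp add: Aset_def X_def)
    then show ?thesis using expl_count[where lam=lam and n=n and k=k and \<alpha>="real k * card X / n" and E="[]" and m=m and r=L and D="{v}", OF lam] alpha_bound[OF n]
      by (simp add: X_def)
  qed
  also have "\<dots> = (card X * (1 + (lam-1)*L*k/n))^m"
    by (simp add: Aset_def X_def algebra_simps)
  also have "\<dots> = card X ^m * (1 + (lam-1)*L*k/n)^m" by (simp add: power_mult_distrib)
  finally show ?thesis by (simp add: Bad_def lp_def X_def)
qed

lemma ratio_bound:
  fixes c :: real
  assumes k: "k \<ge> 3" and n: "n > 0" and c: "c > 0" and m: "real m \<le> c * n"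
    and x: "x = c * k * (real k - 1)" "x < 1" and Npos: "card (clauses n k) > 0"
  shows "card {\<Phi> \<in> instances n k m. L < card (cl \<Phi> v)} / card (instances n k m)
     \<le> exp (- ln x / (real k - 1)) * exp (- ((x - 1 - ln x) / (real k - 1)) * L)"
proof -
  define lam where "lam = 1 / x"
  have x0: "x > 0" using x c k by simp
  have lam1: "lam \<ge> 1" using x0 x by (simp add: lam_def)
  have k1: "real k - 1 > 0" using k by simp
  define Nx where "Nx = card (clauses n k)"
  define B where "B = card {\<Phi> \<in> instances n k m. L < card (cl \<Phi> v)}"
  define lp where "lp = lam powr ((real L - 1)/(real k - 1))"
  define q where "q = 1 + (lam-1)*L*k/n"
  have cardI: "card (instances n k m) = Nx ^ m"
    using finite_clauses by (simp add: instances_eq Nx_def card_lists_length_eq)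
  have lp0: "lp > 0" using lam1 by (simp add: lp_def)
  have pv: "B * lp \<le> Nx ^ m * q ^ m"
    using per_v[of k n lam m L v] k n lam1 by (simp add: B_def lp_def q_def Nx_def)
  have q0: "0 \<le> q" using lam1 n by (simp add: q_def)
  have "q ^ m \<le> exp ((lam-1)*L*k/n) ^ m"
    using q0 by (intro power_mono) (simp_all add: q_def)
  also have "\<dots> = exp (real m * ((lam-1)*L*k/n))" by (rule exp_of_nat_mult[symmetric])
  also have "\<dots> \<le> exp ((c * n) * ((lam-1)*L*k/n))"
    using m lam1 n by (intro exp_mono mult_right_mono) auto
  also have "\<dots> = exp (c*(lam-1)*k*L)" using n by (simp add: field_simps)
  finally have qm: "q ^ m \<le> exp (c*(lam-1)*k*L)" .
  show ?thesis
  proof (cases "Nx = 0")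
    case True
    then show ?thesis using Npos by (simp add: Nx_def)
  next
    case False
    then have Nxp: "real Nx ^ m > 0" by simp
    have "B / card (instances n k m) = (B * lp) / (Nx ^ m * lp)"
      using lp0 cardI by simp
    also have "\<dots> \<le> (Nx ^ m * q ^ m) / (Nx ^ m * lp)"
      using pv lp0 Nxp by (intro divide_right_mono) auto
    also have "\<dots> = q ^ m / lp" using Nxp lp0 by (simp add: field_simps)
    also have "\<dots> \<le> exp (c*(lam-1)*k*L) / lp" using qm lp0 by (intro divide_right_mono) auto
    also have "lp = exp (ln lam * ((real L - 1)/(real k - 1)))"
      using lam1 by (simp add: lp_def powr_def)
    also have "exp (c*(lam-1)*k*L) / exp (ln lam * ((real L - 1)/(real k - 1))) =
               exp (c*(lam-1)*k*L - ln lam * ((real L - 1)/(real k - 1)))" by (simp add: exp_diff)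
    also have "c*(lam-1)*k*L - ln lam * ((real L - 1)/(real k - 1)) =
               - ln x / (real k - 1) + (- ((x - 1 - ln x) / (real k - 1)) * L)"
    proof -
      have lnl: "ln lam = - ln x" using x0 by (simp add: lam_def ln_div)
      have ck: "c * k = x / (real k - 1)" using x(1) k1 by (simp add: field_simps)
      have "c * (lam - 1) * k = (c * k) * (1 / x - 1)" by (simp add: lam_def)
      also have "\<dots> = x / (real k - 1) * (1 / x - 1)" by (simp only: ck)
      also have "\<dots> = (1 - x) / (real k - 1)" using x0 k1 by (simp add: field_simps)
      finally have e1: "c * (lam - 1) * k = (1 - x) / (real k - 1)" .
      have gen: "\<And>d y. d > 0 \<Longrightarrow> (1 - x) / d * L - (- y) * ((real L - 1) / d) =
                 - y / d + (- ((x - 1 - y) / d) * L)"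
        by (simp add: field_simps)
      show ?thesis unfolding lnl e1[symmetric] using gen[OF k1, of "ln x"] e1 by simp
    qed
    also have "exp (- ln x / (real k - 1) + (- ((x - 1 - ln x) / (real k - 1)) * L)) =
               exp (- ln x / (real k - 1)) * exp (- ((x - 1 - ln x) / (real k - 1)) * L)"
      by (rule exp_add)
    finally show ?thesis by (simp add: B_def)
  qed
qed

lemma clauses_nonempty:
  assumes "k \<le> n" shows "card (clauses n k) > 0"
proof -
  define C0 where "C0 = (\<lambda>i. (i, True)) ` {..<k}"
  have "card C0 = k" unfolding C0_def by (subst card_image) (auto simp: inj_on_def)
  moreover have "fst ` C0 = {..<k}" by (force simp: C0_def image_image)
  ultimately have "C0 \<in> clauses n k" using assms by (auto simp: clauses_def C0_def)
  then show ?thesis using finite_clauses by (auto simp: card_gt_0_iff)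
qed

lemma prob_bound:
  fixes c :: real
  assumes k: "k \<ge> 3" and nk: "k \<le> n" and c: "c > 0"
    and x: "x = c * k * (real k - 1)" "x < 1"
    and \<delta>: "\<delta> = (x - 1 - ln x) / (real k - 1)" "\<delta> > 0"
  shows "measure_pmf.prob (random_1ink n k (nat \<lfloor>c * real n\<rfloor>))
        {\<Phi>. \<forall>A\<in>sat_assignments n \<Phi>. \<forall>B\<in>sat_assignments n \<Phi>.
              l_connected n \<Phi> (nat \<lfloor>(2/\<delta>) * ln (real n)\<rfloor>) A B}
     \<ge> 1 - exp (- ln x / (real k - 1)) * exp \<delta> / n"
proof -
  define m where "m = nat \<lfloor>c * real n\<rfloor>"
  define L where "L = nat \<lfloor>(2/\<delta>) * ln (real n)\<rfloor>"
  define G where "G = {\<Phi>. \<forall>A\<in>sat_assignments n \<Phi>. \<forall>B\<in>sat_assignments n \<Phi>. l_connected n \<Phi> L A B}"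
  define I where "I = instances n k m"
  define Bad where "Bad v = {\<Phi> \<in> I. L < card (cl \<Phi> v)}" for v
  define K1 where "K1 = exp (- ln x / (real k - 1))"
  have n: "n > 0" using k nk by simp
  have Npos: "card (clauses n k) > 0" using clauses_nonempty[OF nk] .
  have finI: "finite I" using finite_clauses by (simp add: I_def instances_eq finite_lists_length_eq)
  have cardI: "card I > 0" using Npos finite_clauses by (simp add: I_def instances_eq card_lists_length_eq)
  then have Ine: "I \<noteq> {}" by auto
  have mle: "real m \<le> c * n" using c by (simp add: m_def)
  have Lge: "real L \<ge> (2/\<delta>) * ln (real n) - 1"
  proof -
    have "ln (real n) \<ge> 0" using n by simp
    then have "(2/\<delta>) * ln (real n) \<ge> 0" using \<delta>(2) by simp
    then show ?thesis unfolding L_def by linarith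
  qed
  have expL: "exp (- \<delta> * L) \<le> exp \<delta> / (real n * real n)"
  proof -
    have "\<delta> * L \<ge> \<delta> * ((2/\<delta>) * ln (real n) - 1)" using Lge \<delta> by (intro mult_left_mono) auto
    also have "\<delta> * ((2/\<delta>) * ln (real n) - 1) = ln n + ln n - \<delta>" using \<delta>(2) by (simp add: field_simps)
    finally have "- \<delta> * L \<le> \<delta> - ln n - ln n" by simp
    then have "exp (- \<delta> * L) \<le> exp (\<delta> - ln n - ln n)" by simp
    also have "\<dots> = exp \<delta> / (real n * real n)"
    proof -
      have en: "exp (ln (real n)) = real n" using n by simp
      show ?thesis by (simp only: exp_diff en) (simp add: divide_divide_eq_left)
    qed
    finally show ?thesis .
  qed
  have bv: "card (Bad v) / card I \<le> K1 * exp \<delta> / (real n * real n)" for v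
  proof -
    have "card (Bad v) / card I \<le> K1 * exp (- \<delta> * L)"
      using ratio_bound[OF k n c mle x Npos, of L v] \<delta>(1) by (simp add: Bad_def I_def K1_def)
    also have "\<dots> \<le> K1 * (exp \<delta> / (real n * real n))" using expL by (intro mult_left_mono) (auto simp: K1_def)
    finally show ?thesis by simp
  qed
  have sub: "I - G \<subseteq> (\<Union>v<n. Bad v)"
  proof
    fix \<Phi> assume \<Phi>: "\<Phi> \<in> I - G"
    have cls: "set \<Phi> \<subseteq> clauses n k" using \<Phi> by (auto simp: I_def instances_def)
    show "\<Phi> \<in> (\<Union>v<n. Bad v)"
    proof (rule ccontr)
      assume "\<Phi> \<notin> (\<Union>v<n. Bad v)"
      then have "\<forall>v<n. card (cl \<Phi> v) \<le> L" using \<Phi> by (auto simp: Bad_def not_less)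
      then have "\<Phi> \<in> G" using connect[OF cls] by (auto simp: G_def)
      then show False using \<Phi> by simp
    qed
  qed
  have "card (I - G) \<le> card (\<Union>v<n. Bad v)"
    using finI by (intro card_mono[OF _ sub]) (auto simp: Bad_def)
  also have "\<dots> \<le> (\<Sum>v<n. card (Bad v))" by (rule card_UN_le) simp
  finally have cIG: "real (card (I - G)) \<le> (\<Sum>v<n. real (card (Bad v)))" by (simp flip: of_nat_sum)
  have "real (card (I - G)) / card I \<le> (\<Sum>v<n. card (Bad v) / card I)"
    unfolding sum_divide_distrib[symmetric] using cIG cardI by (intro divide_right_mono) auto
  also have "\<dots> \<le> (\<Sum>v<n. K1 * exp \<delta> / (real n * real n))" by (intro sum_mono bv)
  also have "\<dots> = K1 * exp \<delta> / n" using n by simp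
  finally have r: "real (card (I - G)) / card I \<le> K1 * exp \<delta> / n" .
  have "card I = card (I \<inter> G) + card (I - G)" using finI by (metis card_Int_Diff)
  then have e: "real (card I) = real (card (I \<inter> G)) + real (card (I - G))" by simp
  have "real (card (I \<inter> G)) / card I = 1 - real (card (I - G)) / card I"
  proof -
    have N: "real (card I) \<noteq> 0" using cardI by simp
    have "1 - real (card (I - G)) / card I = (real (card I) - real (card (I - G))) / card I"
      using N by (simp add: diff_divide_distrib)
    also have "real (card I) - real (card (I - G)) = real (card (I \<inter> G))" using e by simp
    finally show ?thesis by simp
  qed
  moreover have "measure_pmf.prob (random_1ink n k m) G = card (I \<inter> G) / card I"
    unfolding random_1ink_def I_def[symmetric] by (rule measure_pmf_of_set[OF Ine finI])
  ultimately have "1 - K1 * exp \<delta> / n \<le> measure_pmf.prob (random_1ink n k m) G" using r by simp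
  then show ?thesis unfolding m_def L_def G_def K1_def .
qed

theorem theorem1:
  fixes k :: nat and c :: real
  assumes "k \<ge> 3" and "0 < c" and "c < 1 / (real k * (real k - 1))"
  shows "\<exists>\<gamma>::real. \<gamma> > 0 \<and>
    (\<lambda>n. measure_pmf.prob (random_1ink n k (nat \<lfloor>c * real n\<rfloor>))
        {\<Phi>. \<forall>A\<in>sat_assignments n \<Phi>. \<forall>B\<in>sat_assignments n \<Phi>.
              l_connected n \<Phi> (nat \<lfloor>\<gamma> * ln (real n)\<rfloor>) A B})
    \<longlonglongrightarrow> 1"
proof -
  define x where "x = c * k * (real k - 1)"
  have k1: "real k - 1 > 0" using assms by simp
  have x0: "x > 0" using assms k1 by (simp add: x_def)
  have x1: "x < 1" using assms k1 by (simp add: x_def field_simps)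
  define \<delta> where "\<delta> = (x - 1 - ln x) / (real k - 1)"
  have "ln x < x - 1"
  proof -
    have s0: "sqrt x > 0" using x0 by simp
    have s1: "sqrt x \<noteq> 1" using x1 x0 by auto
    have "ln x = 2 * ln (sqrt x)" using x0 by (simp add: ln_sqrt)
    also have "\<dots> \<le> 2 * (sqrt x - 1)" using ln_le_minus_one[OF s0] by simp
    also have "\<dots> < x - 1"
    proof -
      have "(sqrt x - 1)^2 > 0" using s1 by simp
      then show ?thesis using x0 by (simp add: power2_eq_square algebra_simps)
    qed
    finally show ?thesis .
  qed
  then have \<delta>0: "\<delta> > 0" using k1 by (simp add: \<delta>_def)
  define K where "K = exp (- ln x / (real k - 1)) * exp \<delta>"
  let ?f = "\<lambda>n. measure_pmf.prob (random_1ink n k (nat \<lfloor>c * real n\<rfloor>))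
        {\<Phi>. \<forall>A\<in>sat_assignments n \<Phi>. \<forall>B\<in>sat_assignments n \<Phi>.
              l_connected n \<Phi> (nat \<lfloor>(2/\<delta>) * ln (real n)\<rfloor>) A B}"
  have "?f \<longlonglongrightarrow> 1"
  proof (rule tendsto_sandwich[where f="\<lambda>n. 1 - K / real n" and h="\<lambda>n. 1"])
    show "\<forall>\<^sub>F n in sequentially. 1 - K / real n \<le> ?f n"
      using eventually_ge_at_top[of k]
    proof (rule eventually_mono)
      fix n assume "k \<le> n"
      then show "1 - K / real n \<le> ?f n"
        using prob_bound[OF assms(1) _ assms(2) x_def x1 \<delta>_def \<delta>0] by (simp add: K_def)
    qed
    show "\<forall>\<^sub>F n in sequentially. ?f n \<le> 1" by simp
    show "(\<lambda>n. 1 - K / real n) \<longlonglongrightarrow> 1"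
      using tendsto_diff[OF tendsto_const lim_const_over_n[of K]] by simp
    show "(\<lambda>n. 1::real) \<longlonglongrightarrow> 1" by simp
  qed
  then show ?thesis using \<delta>0 by (intro exI[of _ "2/\<delta>"]) simp
qed

end
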